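(* Let $G$ be a connected graph with $E(G)\neq\emptyset$, and let $x,y\in V(G)$ be distinct vertices such that $G+xy$ has no cutvertex. Then there exists an $x$--$y$ bond $F$ in $G$ such that $\mathrm{pw}(G-y;x)\le 3|F|-2$; moreover, if $G$ itself has no cutvertex, then $F$ can be chosen so that $\mathrm{pw}(G-y;x)\le 3|F|-3$.
   Context: A bond of a graph $G$ is an inclusion-wise minimal set of edges $F$ such that $G-F$ has more connected components than $G$. For distinct vertices $x,y$, an $x$--$y$ bond is a bond $F$ such that $x$ and $y$ lie in different components of $G-F$. $G+xy$ denotes $G$ with the edge $xy$ added (if not already present). A path-decomposition of $H$ is a sequence $(X_0,\dots,X_s)$ of subsets of $V(H)$ such that for each vertex $v$ the indices $i$ with $v\in X_i$ form a non-empty interval, and each edge has both ends in some $X_i$; its width is $\max_i|X_i|-1$. For $x\in V(H)$, $\mathrm{pw}(H;x)$ denotes the minimum width of a path-decomposition $(X_0,\dots,X_s)$ of $H$ with $x\in X_0$. *)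

theory Defs
  imports Main
begin

definition graph :: "'a set \<Rightarrow> 'a set set \<Rightarrow> bool" where
  "graph V E \<longleftrightarrow> finite V \<and> (\<forall>e\<in>E. \<exists>u v. e = {u, v} \<and> u \<noteq> v \<and> u \<in> V \<and> v \<in> V)"

definition adj :: "'a set set \<Rightarrow> 'a \<Rightarrow> 'a \<Rightarrow> bool" where
  "adj E u v \<longleftrightarrow> {u, v} \<in> E \<and> u \<noteq> v"

definition reach :: "'a set \<Rightarrow> 'a set set \<Rightarrow> 'a \<Rightarrow> 'a \<Rightarrow> bool" where
  "reach V E u v \<longleftrightarrow> u \<in> V \<and> v \<in> V \<and>
     (\<lambda>a b. a \<in> V \<and> b \<in> V \<and> adj E a b)\<^sup>*\<^sup>* u v"

definition components :: "'a set \<Rightarrow> 'a set set \<Rightarrow> 'a set set" where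
  "components V E = (\<lambda>v. {u. reach V E v u}) ` V"

definition ncomp :: "'a set \<Rightarrow> 'a set set \<Rightarrow> nat" where
  "ncomp V E = card (components V E)"

definition connected_graph :: "'a set \<Rightarrow> 'a set set \<Rightarrow> bool" where
  "connected_graph V E \<longleftrightarrow> V \<noteq> {} \<and> (\<forall>u\<in>V. \<forall>v\<in>V. reach V E u v)"

definition del_vertex_edges :: "'a set set \<Rightarrow> 'a \<Rightarrow> 'a set set" where
  "del_vertex_edges E v = {e \<in> E. v \<notin> e}"

definition is_cutvertex :: "'a set \<Rightarrow> 'a set set \<Rightarrow> 'a \<Rightarrow> bool" where
  "is_cutvertex V E v \<longleftrightarrow> v \<in> V \<and> ncomp (V - {v}) (del_vertex_edges E v) > ncomp V E"

definition has_cutvertex :: "'a set \<Rightarrow> 'a set set \<Rightarrow> bool" where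
  "has_cutvertex V E \<longleftrightarrow> (\<exists>v. is_cutvertex V E v)"

definition disconnecting :: "'a set \<Rightarrow> 'a set set \<Rightarrow> 'a set set \<Rightarrow> bool" where
  "disconnecting V E F \<longleftrightarrow> F \<subseteq> E \<and> ncomp V (E - F) > ncomp V E"

definition bond :: "'a set \<Rightarrow> 'a set set \<Rightarrow> 'a set set \<Rightarrow> bool" where
  "bond V E F \<longleftrightarrow> disconnecting V E F \<and> (\<forall>F'. F' \<subset> F \<longrightarrow> \<not> disconnecting V E F')"

definition xy_bond :: "'a set \<Rightarrow> 'a set set \<Rightarrow> 'a \<Rightarrow> 'a \<Rightarrow> 'a set set \<Rightarrow> bool" where
  "xy_bond V E x y F \<longleftrightarrow> bond V E F \<and> x \<in> V \<and> y \<in> V \<and> \<not> reach V (E - F) x y"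

definition path_decomp :: "'a set \<Rightarrow> 'a set set \<Rightarrow> 'a set list \<Rightarrow> bool" where
  "path_decomp V E Xs \<longleftrightarrow> Xs \<noteq> [] \<and> (\<forall>X\<in>set Xs. X \<subseteq> V) \<and>
     (\<forall>v\<in>V. \<exists>a b. a \<le> b \<and> b < length Xs \<and> {i. i < length Xs \<and> v \<in> Xs ! i} = {a..b}) \<and>
     (\<forall>e\<in>E. \<exists>i<length Xs. e \<subseteq> Xs ! i)"

definition pd_width :: "'a set list \<Rightarrow> int" where
  "pd_width Xs = int (Max (card ` set Xs)) - 1"

definition pw_at :: "'a set \<Rightarrow> 'a set set \<Rightarrow> 'a \<Rightarrow> int" where
  "pw_at V E x = (LEAST w. \<exists>Xs. path_decomp V E Xs \<and> x \<in> hd Xs \<and> w = pd_width Xs)"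

end

theory Submission
  imports Defs
begin


definition conn :: "'a set \<Rightarrow> 'a set set \<Rightarrow> bool" where
  "conn S E \<longleftrightarrow> (\<forall>u\<in>S. \<forall>v\<in>S. reach S E u v)"

definition cut :: "'a set \<Rightarrow> 'a set set \<Rightarrow> 'a set \<Rightarrow> 'a set set" where
  "cut V E P = {e \<in> E. \<exists>a b. a \<in> P \<and> b \<in> V - P \<and> e = {a, b}}"

lemma adj_sym: "adj E u v \<Longrightarrow> adj E v u"
  by (auto simp: adj_def insert_commute)

lemma reach_refl: "u \<in> S \<Longrightarrow> reach S E u u"
  by (simp add: reach_def)

lemma reach_step: "adj E u v \<Longrightarrow> u \<in> S \<Longrightarrow> v \<in> S \<Longrightarrow> reach S E u v"
  by (auto simp: reach_def)

lemma reach_in: "reach S E u v \<Longrightarrow> u \<in> S \<and> v \<in> S"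
  by (simp add: reach_def)

lemma reach_trans: "reach S E u v \<Longrightarrow> reach S E v w \<Longrightarrow> reach S E u w"
  by (auto simp: reach_def)

lemma reach_sym: "reach S E u v \<Longrightarrow> reach S E v u"
proof -
  let ?r = "\<lambda>a b. a \<in> S \<and> b \<in> S \<and> adj E a b"
  have eq: "?r\<inverse>\<inverse> = ?r" by (auto simp: fun_eq_iff intro: adj_sym)
  assume "reach S E u v"
  then have "?r\<^sup>*\<^sup>* u v" "u \<in> S" "v \<in> S" by (auto simp: reach_def)
  then have "?r\<inverse>\<inverse>\<^sup>*\<^sup>* v u" by (simp add: rtranclp_converseI)
  with eq \<open>u \<in> S\<close> \<open>v \<in> S\<close> show ?thesis by (simp add: reach_def)
qed

lemma reach_mono:
  assumes "reach S E u v" "S \<subseteq> S'"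
    and "\<And>a b. a \<in> S \<Longrightarrow> b \<in> S \<Longrightarrow> adj E a b \<Longrightarrow> adj E' a b"
  shows "reach S' E' u v"
proof -
  have "(\<lambda>a b. a \<in> S \<and> b \<in> S \<and> adj E a b)\<^sup>*\<^sup>* u v" using assms(1) by (simp add: reach_def)
  then have "(\<lambda>a b. a \<in> S' \<and> b \<in> S' \<and> adj E' a b)\<^sup>*\<^sup>* u v"
    by (induction rule: rtranclp_induct) (use assms(2,3) in \<open>auto intro: rtranclp.rtrancl_into_rtrancl\<close>)
  with assms(1,2) show ?thesis by (auto simp: reach_def)
qed

lemma reach_cross:
  assumes "reach S E a b" "a \<in> A" "b \<notin> A"
  shows "\<exists>u w. u \<in> S \<and> u \<in> A \<and> w \<in> S \<and> w \<notin> A \<and> adj E u w"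
proof -
  have "(\<lambda>a b. a \<in> S \<and> b \<in> S \<and> adj E a b)\<^sup>*\<^sup>* a b" using assms(1) by (simp add: reach_def)
  then show ?thesis using assms(3)
    by (induction rule: rtranclp_induct) (use assms(2) in blast)+
qed

lemma reach_restrict:
  assumes "reach S E a b"
  shows "reach {z \<in> S. reach S E z b} E a b"
proof -
  have "(\<lambda>a b. a \<in> S \<and> b \<in> S \<and> adj E a b)\<^sup>*\<^sup>* a b" using assms(1) by (simp add: reach_def)
  then show ?thesis using assms
  proof (induction rule: converse_rtranclp_induct)
    case base
    then show ?case by (auto simp: reach_def)
  next
    case (step a c)
    then have rc: "reach S E c b" by (auto simp: reach_def intro: converse_rtranclp_into_rtranclp)
    have "reach {z \<in> S. reach S E z b} E a c"
      using step rc by (intro reach_step) auto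
    from this step.IH[OF rc] show ?case by (rule reach_trans)
  qed
qed

lemma conn_reach: "conn S E \<Longrightarrow> u \<in> S \<Longrightarrow> v \<in> S \<Longrightarrow> reach S E u v"
  by (simp add: conn_def)

lemma ncomp_one:
  assumes "finite V" "conn V E" "V \<noteq> {}"
  shows "ncomp V E = 1"
proof -
  have "components V E = {V}"
    using assms(2,3) by (auto simp: components_def conn_def dest: reach_in)
  then show ?thesis by (simp add: ncomp_def)
qed

lemma ncomp_two:
  assumes "finite V" "a \<in> V" "b \<in> V" "\<not> reach V E a b"
  shows "ncomp V E \<ge> 2"
proof -
  let ?c = "\<lambda>v. {u. reach V E v u}"
  have "?c a \<noteq> ?c b" using assms reach_refl[of b V E] by auto
  moreover have "?c a \<in> components V E" "?c b \<in> components V E"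
    using assms by (auto simp: components_def)
  moreover have "finite (components V E)" using assms(1) by (simp add: components_def)
  ultimately have "card {?c a, ?c b} \<le> card (components V E)"
    by (intro card_mono) auto
  with \<open>?c a \<noteq> ?c b\<close> show ?thesis by (simp add: ncomp_def)
qed

lemma ncomp_le1_reach:
  "finite V \<Longrightarrow> ncomp V E \<le> 1 \<Longrightarrow> a \<in> V \<Longrightarrow> b \<in> V \<Longrightarrow> reach V E a b"
  using ncomp_two by fastforce

lemma nocut_reach:
  assumes "finite V" "connected_graph V E'" "\<not> has_cutvertex V E'"
    "a \<in> V - {v}" "b \<in> V - {v}"
  shows "reach (V - {v}) E' a b"
proof (cases "v \<in> V")
  case True
  have c: "conn V E'" using assms(2) by (simp add: connected_graph_def conn_def)
  have "ncomp V E' = 1" using ncomp_one[OF assms(1) c] assms(2) by (simp add: connected_graph_def)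
  then have "ncomp (V - {v}) (del_vertex_edges E' v) \<le> 1"
    using assms(3) True by (auto simp: has_cutvertex_def is_cutvertex_def)
  then have "reach (V - {v}) (del_vertex_edges E' v) a b"
    using ncomp_le1_reach[of "V - {v}"] assms(1,4,5) by simp
  then show ?thesis
    by (rule reach_mono) (simp_all add: adj_def del_vertex_edges_def)
next
  case False
  then show ?thesis using assms(2,4,5) by (simp add: connected_graph_def)
qed



lemma step_lemma:
  assumes fin: "finite V"
    and NC: "\<And>v a b. a \<in> V - {v} \<Longrightarrow> b \<in> V - {v} \<Longrightarrow> reach (V - {v}) (E \<union> {{x, y}}) a b"
    and xP: "x \<in> P" and PV: "P \<subseteq> V" and yP: "y \<notin> P" and yV: "y \<in> V"
    and Rc: "conn (V - P) E" and ne: "V - P \<noteq> {y}"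
  shows "\<exists>v\<in>V - P - {y}. (\<exists>u\<in>P. adj E u v) \<and> conn (V - P - {v}) E"
proof -
  define R where "R = V - P"
  have yR: "y \<in> R" using yV yP by (simp add: R_def)
  have xR: "x \<notin> R" using xP by (simp add: R_def)
  define D where "D v = {w \<in> R - {v}. \<not> reach (R - {v}) E w y}" for v
  define Cand where "Cand = {v \<in> R - {y}. \<exists>u\<in>P. adj E u v}"
  have adjE: "adj E u w" if "adj (E \<union> {{x, y}}) u w" "u \<noteq> y" "u \<noteq> x" for u w
    using that by (auto simp: adj_def doubleton_eq_iff)
  have "Cand \<noteq> {}"
  proof -
    obtain a where a: "a \<in> R" "a \<noteq> y" using ne yR R_def by blast
    have "reach (V - {y}) (E \<union> {{x, y}}) a x"
      using NC[of a y x] a xP PV yP R_def by auto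
    then obtain u w where uw: "u \<in> V - {y}" "u \<notin> P" "w \<in> V - {y}" "w \<in> P"
       "adj (E \<union> {{x, y}}) u w"
      using reach_cross[of "V - {y}" "E \<union> {{x, y}}" a x "- P"] a xP R_def by auto
    have "adj E u w" using adjE[OF uw(5)] uw xP by auto
    then have "u \<in> Cand" using uw by (auto simp: Cand_def R_def intro: adj_sym)
    then show ?thesis by blast
  qed
  then obtain v0 where "v0 \<in> Cand" by blast
  from ex_has_least_nat[of "\<lambda>v. v \<in> Cand", OF this, of "\<lambda>v. card (D v)"]
  obtain v where v: "v \<in> Cand" and vmin: "\<And>v'. v' \<in> Cand \<Longrightarrow> card (D v) \<le> card (D v')"
    by blast
  have vR: "v \<in> R" "v \<noteq> y" using v by (auto simp: Cand_def)
  have yD: "y \<notin> D w" for w by (auto simp: D_def intro: reach_refl)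
  have Dfin: "finite (D w)" for w using fin by (auto simp: D_def R_def)
  have "D v = {}"
  proof (rule ccontr)
    assume "D v \<noteq> {}"
    then obtain c where c: "c \<in> D v" by blast
    have cV: "c \<in> V - {v}" using c by (auto simp: D_def R_def)
    have xV: "x \<in> V - {v}" using xP PV vR R_def by auto
    have "reach (V - {v}) (E \<union> {{x, y}}) c x" using NC[OF cV xV] .
    moreover have "x \<notin> D v" using xR by (auto simp: D_def)
    ultimately obtain u w where uw: "u \<in> V - {v}" "u \<in> D v" "w \<in> V - {v}" "w \<notin> D v"
       "adj (E \<union> {{x, y}}) u w"
      using reach_cross[of "V - {v}" _ c x "D v"] c by blast
    have uR: "u \<in> R - {v}" "u \<noteq> y" "u \<noteq> x" using uw(2) yD xR by (auto simp: D_def)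
    have uwE: "adj E u w" using adjE[OF uw(5)] uR by auto
    have wP: "w \<in> P"
    proof (rule ccontr)
      assume "w \<notin> P"
      then have wR: "w \<in> R - {v}" using uw(3) by (auto simp: R_def)
      then have "reach (R - {v}) E w y" using uw(4) by (auto simp: D_def)
      moreover have "reach (R - {v}) E u w" using uwE uR wR by (intro reach_step) auto
      ultimately have "reach (R - {v}) E u y" by (blast intro: reach_trans)
      then show False using uw(2) by (auto simp: D_def)
    qed
    have uC: "u \<in> Cand" using uR wP uwE by (auto simp: Cand_def intro: adj_sym)
    define T where "T = {z \<in> R - {v}. reach (R - {v}) E z y}"
    have Tu: "T \<subseteq> R - {u}" using uw(2) by (auto simp: T_def D_def)
    have TR: "reach (R - {u}) E a y" if "a \<in> R - {v}" "reach (R - {v}) E a y" for a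
    proof -
      have "reach T E a y" using reach_restrict[OF that(2)] by (simp add: T_def)
      then show ?thesis by (rule reach_mono) (use Tu in auto)
    qed
    have vreach: "reach (R - {u}) E v y"
    proof -
      have "reach R E v y" using Rc vR yR by (simp add: conn_def R_def)
      moreover have "y \<notin> insert v (D v)" using yD vR by auto
      ultimately obtain p q where pq: "p \<in> R" "p \<in> insert v (D v)" "q \<in> R" "q \<notin> insert v (D v)"
        "adj E p q"
        using reach_cross[of R E v y "insert v (D v)"] by blast
      have qT: "q \<in> R - {v}" "reach (R - {v}) E q y" using pq by (auto simp: D_def)
      have "p = v"
      proof (rule ccontr)
        assume "p \<noteq> v"
        then have "p \<in> D v" using pq by auto
        have "reach (R - {v}) E p q" using pq qT \<open>p \<in> D v\<close> by (intro reach_step) (auto simp: D_def)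
        then have "reach (R - {v}) E p y" using qT by (blast intro: reach_trans)
        then show False using \<open>p \<in> D v\<close> by (auto simp: D_def)
      qed
      have qu: "q \<noteq> u" using pq uw(2) by auto
      have vu: "v \<noteq> u" using uw(2) by (auto simp: D_def)
      have "reach (R - {u}) E v q" using pq \<open>p = v\<close> qu vu by (intro reach_step) auto
      then show ?thesis using TR[OF qT] by (blast intro: reach_trans)
    qed
    have sub: "D u \<subseteq> D v - {u}"
    proof
      fix w' assume w': "w' \<in> D u"
      then have w'R: "w' \<in> R" "w' \<noteq> u" and nr: "\<not> reach (R - {u}) E w' y" by (auto simp: D_def)
      have "w' \<noteq> v" using nr vreach by auto
      moreover have "\<not> reach (R - {v}) E w' y"
      proof
        assume "reach (R - {v}) E w' y"
        then have "reach (R - {u}) E w' y" using TR[of w'] w'R \<open>w' \<noteq> v\<close> by simp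
        then show False using nr by simp
      qed
      ultimately show "w' \<in> D v - {u}" using w'R by (auto simp: D_def)
    qed
    have "card (D u) < card (D v)"
    proof -
      have "card (D u) \<le> card (D v - {u})" using sub Dfin by (intro card_mono) auto
      also have "\<dots> < card (D v)" using uw(2) Dfin by (intro card_Diff1_less) auto
      finally show ?thesis .
    qed
    with vmin[OF uC] show False by simp
  qed
  have "conn (R - {v}) E"
    unfolding conn_def
  proof (intro ballI)
    fix a b assume "a \<in> R - {v}" "b \<in> R - {v}"
    with \<open>D v = {}\<close> have "reach (R - {v}) E a y" "reach (R - {v}) E b y" by (auto simp: D_def)
    then show "reach (R - {v}) E a b" by (blast intro: reach_trans reach_sym)
  qed
  then show ?thesis using v by (auto simp: Cand_def R_def)
qed



lemma order_lemma:
  assumes fin: "finite V"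
    and NC: "\<And>v a b. a \<in> V - {v} \<Longrightarrow> b \<in> V - {v} \<Longrightarrow> reach (V - {v}) (E \<union> {{x, y}}) a b"
    and xP: "x \<in> P" and PV: "P \<subseteq> V" and yP: "y \<notin> P" and yV: "y \<in> V"
    and Pc: "conn P E" and Rc: "conn (V - P) E"
  shows "\<exists>ws. distinct ws \<and> set ws = V - P - {y} \<and>
     (\<forall>k\<le>length ws. conn (P \<union> set (take k ws)) E \<and> conn (V - P - set (take k ws)) E)"
  using xP PV yP Pc Rc
proof (induction "card (V - P)" arbitrary: P rule: less_induct)
  case less
  show ?case
  proof (cases "V - P = {y}")
    case True
    show ?thesis by (rule exI[of _ "[]"]) (use True less.prems in auto)
  next
    case False
    obtain v u where v: "v \<in> V - P - {y}" "u \<in> P" "adj E u v" and Rc': "conn (V - P - {v}) E"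
      using step_lemma[OF fin NC less.prems(1-3) yV less.prems(5) False] by blast
    define P' where "P' = insert v P"
    have Pc': "conn P' E" unfolding conn_def
    proof (intro ballI)
      have r: "reach P' E a u" if "a \<in> P'" for a
      proof (cases "a = v")
        case True
        then show ?thesis using v by (intro reach_step) (auto simp: P'_def intro: adj_sym)
      next
        case False
        then have "reach P E a u" using that v less.prems(4) by (auto simp: P'_def conn_def)
        then show ?thesis by (rule reach_mono) (auto simp: P'_def)
      qed
      fix a b assume "a \<in> P'" "b \<in> P'"
      then show "reach P' E a b" using r by (blast intro: reach_trans reach_sym)
    qed
    have eqR: "V - P' = V - P - {v}" by (auto simp: P'_def)
    have lt: "card (V - P') < card (V - P)"
      unfolding eqR by (rule card_Diff1_less) (use fin v in auto)
    obtain ws where ws: "distinct ws" "set ws = V - P' - {y}"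
      "\<forall>k\<le>length ws. conn (P' \<union> set (take k ws)) E \<and> conn (V - P' - set (take k ws)) E"
      using less.hyps[OF lt] less.prems v Pc' Rc' eqR by (auto simp: P'_def)
    show ?thesis
    proof (rule exI[of _ "v # ws"], intro conjI)
      show "distinct (v # ws)" using ws by (auto simp: P'_def)
      show "set (v # ws) = V - P - {y}" using ws v by (auto simp: P'_def)
      show "\<forall>k\<le>length (v # ws). conn (P \<union> set (take k (v # ws))) E \<and> conn (V - P - set (take k (v # ws))) E"
      proof (intro allI impI)
      fix k assume k: "k \<le> length (v # ws)"
      show "conn (P \<union> set (take k (v # ws))) E \<and> conn (V - P - set (take k (v # ws))) E"
      proof (cases k)
        case 0
        then show ?thesis using less.prems by simp
      next
        case (Suc k')
        then have "k' \<le> length ws" using k by simp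
        then have "conn (P' \<union> set (take k' ws)) E \<and> conn (V - P' - set (take k' ws)) E"
          using ws(3) by blast
        moreover have "P \<union> set (take k (v # ws)) = P' \<union> set (take k' ws)"
          "V - P - set (take k (v # ws)) = V - P' - set (take k' ws)"
          using Suc by (auto simp: P'_def)
        ultimately show ?thesis by simp
      qed
      qed
    qed
  qed
qed

lemma finite_edges: "graph V E \<Longrightarrow> finite E"
proof -
  assume g: "graph V E"
  then have "E \<subseteq> Pow V" by (force simp: graph_def)
  then show "finite E" using g by (auto simp: graph_def intro: finite_subset)
qed

lemma bond_lemma:
  assumes g: "graph V E" and cg: "connected_graph V E"
    and PV: "P \<subseteq> V" and Pc: "conn P E" and Rc: "conn (V - P) E"
    and xP: "x \<in> P" and yR: "y \<in> V - P"
  shows "xy_bond V E x y (cut V E P)"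
proof -
  have fin: "finite V" using g by (simp add: graph_def)
  have n1: "ncomp V E = 1"
    using ncomp_one[OF fin] cg by (simp add: connected_graph_def conn_def)
  have nr: "\<not> reach V (E - cut V E P) x y"
  proof
    assume "reach V (E - cut V E P) x y"
    then obtain u w where "u \<in> V" "u \<in> P" "w \<in> V" "w \<notin> P" "adj (E - cut V E P) u w"
      using reach_cross[of V "E - cut V E P" x y P] xP yR by blast
    then show False by (auto simp: adj_def cut_def)
  qed
  have disc: "disconnecting V E (cut V E P)"
    using ncomp_two[OF fin _ _ nr] xP yR PV n1 by (auto simp: disconnecting_def cut_def)
  have minimal: "\<not> disconnecting V E F'" if F': "F' \<subset> cut V E P" for F'
  proof -
    obtain e where e: "e \<in> cut V E P" "e \<notin> F'" using F' by blast
    then obtain a b where ab: "a \<in> P" "b \<in> V - P" "e = {a, b}" "e \<in> E" by (auto simp: cut_def)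
    have inner: "adj (E - F') p q" if "adj E p q" "p \<in> S" "q \<in> S" "S = P \<or> S = V - P" for p q S
    proof -
      have "{p, q} \<notin> cut V E P"
        using that by (auto simp: cut_def doubleton_eq_iff)
      then show ?thesis using that F' by (auto simp: adj_def)
    qed
    have ra: "reach V (E - F') p a" if "p \<in> V" for p
    proof (cases "p \<in> P")
      case True
      then have "reach P E p a" using Pc ab by (simp add: conn_def)
      then show ?thesis by (rule reach_mono) (use PV inner[where S=P] in auto)
    next
      case False
      then have "reach (V - P) E p b" using Rc ab that by (simp add: conn_def)
      then have "reach V (E - F') p b" by (rule reach_mono) (use inner[where S="V - P"] in auto)
      moreover have "reach V (E - F') b a"
        using ab e PV by (intro reach_step) (auto simp: adj_def insert_commute)
      ultimately show ?thesis by (rule reach_trans)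
    qed
    have "conn V (E - F')" unfolding conn_def
      using ra by (blast intro: reach_trans reach_sym)
    then have "ncomp V (E - F') = 1" using ncomp_one[OF fin] xP PV by blast
    then show ?thesis using n1 by (simp add: disconnecting_def)
  qed
  show ?thesis using disc minimal xP yR PV nr by (auto simp: xy_bond_def bond_def)
qed

lemma card_le_cut:
  assumes finE: "finite E" and SP: "S \<subseteq> P"
    and w: "\<And>u. u \<in> S \<Longrightarrow> \<exists>w\<in>V - P. adj E u w"
  shows "card S \<le> card (cut V E P)"
proof -
  define f where "f u = {u, SOME w. w \<in> V - P \<and> adj E u w}" for u
  have fw: "(SOME w. w \<in> V - P \<and> adj E u w) \<in> V - P \<and> adj E u (SOME w. w \<in> V - P \<and> adj E u w)"
    if "u \<in> S" for u
    using w[OF that] by (metis (mono_tags, lifting) someI_ex)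
  have "inj_on f S"
  proof (rule inj_onI)
    fix u u' assume "u \<in> S" "u' \<in> S" "f u = f u'"
    then show "u = u'" using fw[of u] fw[of u'] SP by (auto simp: f_def doubleton_eq_iff)
  qed
  moreover have "f ` S \<subseteq> cut V E P"
    using fw SP by (fastforce simp: f_def cut_def adj_def)
  moreover have "finite (cut V E P)" using finE by (simp add: cut_def)
  ultimately show ?thesis by (rule card_inj_on_le)
qed

lemma pw_le:
  assumes fin: "finite V" and pd: "path_decomp V E Xs" and x: "x \<in> hd Xs"
  shows "pw_at V E x \<le> pd_width Xs"
proof -
  define Q where "Q w = (\<exists>Ys. path_decomp V E Ys \<and> x \<in> hd Ys \<and> w = pd_width Ys)" for w
  have nonneg: "w \<ge> 0" if Qw: "Q w" for w
  proof -
    obtain Ys where Ys: "path_decomp V E Ys" "x \<in> hd Ys" "w = pd_width Ys"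
      using Qw unfolding Q_def by blast
    have "hd Ys \<in> set Ys" using Ys(1) by (simp add: path_decomp_def)
    moreover have "finite (hd Ys)" using Ys(1) fin \<open>hd Ys \<in> set Ys\<close>
      unfolding path_decomp_def by (meson finite_subset)
    ultimately have "card (hd Ys) \<le> Max (card ` set Ys)" "card (hd Ys) \<ge> 1"
      using Ys(2) by (auto simp: card_gt_0_iff Suc_le_eq)
    then show ?thesis using Ys(3) by (simp add: pd_width_def)
  qed
  define k0 where "k0 = (LEAST k::nat. Q (int k))"
  have Qx: "Q (pd_width Xs)" using pd x by (auto simp: Q_def)
  then have "Q (int (nat (pd_width Xs)))" using nonneg by simp
  then have Qk0: "Q (int k0)" unfolding k0_def by (rule LeastI)
  have mink: "int k0 \<le> w" if "Q w" for w
  proof -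
    have "Q (int (nat w))" using that nonneg[OF that] by simp
    then have "k0 \<le> nat w" unfolding k0_def by (rule Least_le)
    then show ?thesis using nonneg[OF that] by simp
  qed
  have "pw_at V E x = int k0"
    unfolding pw_at_def using Qk0 mink by (intro Least_equality) (auto simp: Q_def)
  then show ?thesis using mink[OF Qx] by simp
qed



lemma take_mem:
  assumes "distinct xs" "k < length xs"
  shows "(xs ! k \<in> set (take i xs)) = (k < i)"
proof -
  have "(xs ! k \<in> set (take i xs)) = (\<exists>j<min i (length xs). xs ! j = xs ! k)"
    by (auto simp: in_set_conv_nth)
  also have "\<dots> = (k < i)"
    using assms nth_eq_iff_index_eq by (metis min_less_iff_conj)
  finally show ?thesis .
qed

lemma interval_lemma:
  fixes j n :: nat
  assumes "j < n" and down: "\<And>i i'. j < i' \<Longrightarrow> i' \<le> i \<Longrightarrow> Q i \<Longrightarrow> Q i'"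
  shows "\<exists>a b. a \<le> b \<and> b < n \<and> {i. i < n \<and> (i = j \<or> (j < i \<and> Q i))} = {a..b}"
proof -
  define I where "I = {i. i < n \<and> (i = j \<or> (j < i \<and> Q i))}"
  have fI: "finite I" unfolding I_def by (rule finite_subset[where B="{..<n}"]) auto
  have jI: "j \<in> I" using assms by (simp add: I_def)
  define b where "b = Max I"
  have bI: "b \<in> I" using fI jI unfolding b_def by (intro Max_in) auto
  have jb: "j \<le> b" using fI jI by (simp add: b_def)
  have bn: "b < n" using bI by (simp add: I_def)
  have "I = {j..b}"
  proof
    show "I \<subseteq> {j..b}" using fI by (auto simp: I_def b_def)
  next
    show "{j..b} \<subseteq> I"
    proof
      fix i assume i: "i \<in> {j..b}"
      show "i \<in> I"
      proof (cases "i = j")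
        case True then show ?thesis using jI by simp
      next
        case False
        then have "j < i" "i \<le> b" using i by auto
        then have "Q b" using bI by (auto simp: I_def)
        then have "Q i" using down \<open>j < i\<close> \<open>i \<le> b\<close> by blast
        then show ?thesis using \<open>j < i\<close> \<open>i \<le> b\<close> bn by (simp add: I_def)
      qed
    qed
  qed
  then show ?thesis using jb bn I_def by blast
qed

theorem lemma3p4:
  fixes V :: "'a set" and E :: "'a set set" and x y :: 'a
  assumes "graph V E"
    and "connected_graph V E"
    and "E \<noteq> {}"
    and "x \<in> V" and "y \<in> V" and "x \<noteq> y"
    and "\<not> has_cutvertex V (E \<union> {{x, y}})"
  shows "(\<exists>F. xy_bond V E x y F \<and>
            pw_at (V - {y}) (del_vertex_edges E y) x \<le> 3 * int (card F) - 2)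
       \<and> (\<not> has_cutvertex V E \<longrightarrow>
            (\<exists>F. xy_bond V E x y F \<and>
               pw_at (V - {y}) (del_vertex_edges E y) x \<le> 3 * int (card F) - 3))"
proof -
  note g = assms(1) and cg = assms(2) and xV = assms(4) and yV = assms(5) and xy = assms(6)
  have fin: "finite V" using g by (simp add: graph_def)
  have finE: "finite E" using g by (rule finite_edges)
  have cg': "connected_graph V (E \<union> {{x, y}})"
    unfolding connected_graph_def
  proof (intro conjI ballI)
    show "V \<noteq> {}" using cg by (simp add: connected_graph_def)
    fix u v assume "u \<in> V" "v \<in> V"
    then have "reach V E u v" using cg by (simp add: connected_graph_def)
    then show "reach V (E \<union> {{x, y}}) u v" by (rule reach_mono) (auto simp: adj_def)
  qed
  have NC: "reach (V - {v}) (E \<union> {{x, y}}) a b" if "a \<in> V - {v}" "b \<in> V - {v}" for v a b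
    using nocut_reach[OF fin cg' assms(7) that] .
  have c1: "conn {x} E" by (auto simp: conn_def intro: reach_refl)
  have c2: "conn (V - {x}) E" unfolding conn_def
  proof (intro ballI)
    fix a b assume ab: "a \<in> V - {x}" "b \<in> V - {x}"
    have "reach (V - {x}) (E \<union> {{x, y}}) a b" using NC[OF ab] .
    then show "reach (V - {x}) E a b"
      by (rule reach_mono) (auto simp: adj_def doubleton_eq_iff)
  qed
  obtain ws where ws: "distinct ws" "set ws = V - {x} - {y}"
    "\<forall>k\<le>length ws. conn ({x} \<union> set (take k ws)) E \<and> conn (V - {x} - set (take k ws)) E"
    using order_lemma[OF fin NC _ _ _ yV c1 c2] xV xy by auto
  define vs where "vs = x # ws"
  define n where "n = length vs"
  have dvs: "distinct vs" using ws by (auto simp: vs_def)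
  have svs: "set vs = V - {y}" using ws xV xy by (auto simp: vs_def)
  have vs0: "vs ! 0 = x" by (simp add: vs_def)
  have n1: "n \<ge> 1" by (simp add: n_def vs_def)
  have pre: "conn (set (take k vs)) E \<and> conn (V - set (take k vs)) E" if kk: "1 \<le> k" "k \<le> n" for k
  proof -
    obtain k' where k': "k = Suc k'" using kk by (cases k) auto
    have "k' \<le> length ws" using kk k' by (simp add: n_def vs_def)
    then have "conn ({x} \<union> set (take k' ws)) E \<and> conn (V - {x} - set (take k' ws)) E" using ws(3) by blast
    moreover have "set (take k vs) = {x} \<union> set (take k' ws)" "V - set (take k vs) = V - {x} - set (take k' ws)"
      using k' by (auto simp: vs_def)
    ultimately show ?thesis by simp
  qed
  define cutk where "cutk k = cut V E (set (take k vs))" for k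
  have bondk: "xy_bond V E x y (cutk k)" if "1 \<le> k" "k \<le> n" for k
  proof -
    have "set (take k vs) \<subseteq> V" using svs set_take_subset[of k vs] by auto
    moreover have "x \<in> set (take k vs)" using that vs0 by (cases k) (auto simp: vs_def)
    moreover have "y \<in> V - set (take k vs)" using svs set_take_subset[of k vs] yV by auto
    ultimately show ?thesis unfolding cutk_def using bond_lemma[OF g cg] pre[OF that] by blast
  qed
  have fincut: "finite (cutk k)" for k using finE by (simp add: cutk_def cut_def)
  have cutne: "card (cutk k) \<ge> 1" if "1 \<le> k" "k \<le> n" for k
  proof -
    have "cutk k \<noteq> {}" using bondk[OF that]
      by (auto simp: xy_bond_def bond_def disconnecting_def)
    then show ?thesis using fincut[of k] by (simp add: Suc_le_eq card_gt_0_iff)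
  qed
  define c where "c = Max ((\<lambda>k. card (cutk k)) ` {1..n})"
  have "c \<in> (\<lambda>k. card (cutk k)) ` {1..n}" unfolding c_def by (rule Max_in) (use n1 in auto)
  then obtain k0 where k0: "k0 \<in> {1..n}" "card (cutk k0) = c" by auto
  have cmax: "card (cutk k) \<le> c" if "1 \<le> k" "k \<le> n" for k
    using that unfolding c_def by (intro Max_ge) auto
  define F where "F = cutk k0"
  have bondF: "xy_bond V E x y F" using bondk k0 by (simp add: F_def)
  have cF: "card F = c" using k0 by (simp add: F_def)
  have c1': "c \<ge> 1" using cutne[of k0] k0 by auto
  define S where "S i = (\<lambda>j. vs ! j) ` {j. j < i \<and> (\<exists>k. i \<le> k \<and> k < n \<and> adj E (vs ! j) (vs ! k))}" for i
  define X where "X i = insert (vs ! i) (S i)" for i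
  define Xs where "Xs = map X [0..<n]"
  have lXs: "length Xs = n" by (simp add: Xs_def)
  have nthXs: "Xs ! i = X i" if "i < n" for i using that by (simp add: Xs_def)
  have memX: "(vs ! j \<in> X i) = (i = j \<or> (j < i \<and> (\<exists>k. i \<le> k \<and> k < n \<and> adj E (vs ! j) (vs ! k))))"
    if "j < n" "i < n" for i j
  proof -
    have e: "(vs ! j = vs ! j') = (j = j')" if "j' < n" for j'
      using dvs \<open>j < n\<close> that nth_eq_iff_index_eq n_def by metis
    have e2: "(vs ! j' = vs ! j) = (j' = j)" if "j' < n" for j'
      using e[OF that] by auto
    have "(vs ! j \<in> S i) = (j < i \<and> (\<exists>k. i \<le> k \<and> k < n \<and> adj E (vs ! j) (vs ! k)))"
    proof
      assume "vs ! j \<in> S i"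
      then obtain j' k where "vs ! j = vs ! j'" "j' < i" "i \<le> k" "k < n" "adj E (vs ! j') (vs ! k)"
        unfolding S_def by blast
      moreover have "j' = j" using e2[of j'] \<open>j' < i\<close> \<open>i < n\<close> calculation(1) by auto
      ultimately show "j < i \<and> (\<exists>k. i \<le> k \<and> k < n \<and> adj E (vs ! j) (vs ! k))" by blast
    next
      assume "j < i \<and> (\<exists>k. i \<le> k \<and> k < n \<and> adj E (vs ! j) (vs ! k))"
      then show "vs ! j \<in> S i" unfolding S_def by blast
    qed
    then show ?thesis using e2[OF \<open>i < n\<close>] by (auto simp: X_def)
  qed
  have inV: "vs ! j \<in> V - {y}" if "j < n" for j using that svs n_def nth_mem by blast
  have idx: "\<exists>j<n. v = vs ! j" if "v \<in> V - {y}" for v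
  proof -
    have "v \<in> set vs" using that svs by simp
    then show ?thesis unfolding n_def by (metis in_set_conv_nth)
  qed
  have pd: "path_decomp (V - {y}) (del_vertex_edges E y) Xs"
    unfolding path_decomp_def
  proof (intro conjI ballI)
    show "Xs \<noteq> []" using n1 lXs by auto
  next
    fix B assume "B \<in> set Xs"
    then obtain i where i: "i < n" "B = X i" by (auto simp: Xs_def)
    then have "B \<subseteq> (\<lambda>j. vs ! j) ` {..<n}" by (auto simp: X_def S_def)
    moreover have "(\<lambda>j. vs ! j) ` {..<n} \<subseteq> V - {y}" using inV by blast
    ultimately show "B \<subseteq> V - {y}" by blast
  next
    fix v assume "v \<in> V - {y}"
    then obtain j where j: "j < n" "v = vs ! j" using idx by blast
    have "{i. i < length Xs \<and> v \<in> Xs ! i} =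
        {i. i < n \<and> (i = j \<or> (j < i \<and> (\<exists>k. i \<le> k \<and> k < n \<and> adj E (vs ! j) (vs ! k))))}"
      using j memX nthXs lXs by auto
    moreover have "\<exists>a b. a \<le> b \<and> b < n \<and>
        {i. i < n \<and> (i = j \<or> (j < i \<and> (\<exists>k. i \<le> k \<and> k < n \<and> adj E (vs ! j) (vs ! k))))} = {a..b}"
      by (rule interval_lemma[OF j(1)]) (meson order_trans)
    ultimately show "\<exists>a b. a \<le> b \<and> b < length Xs \<and> {i. i < length Xs \<and> v \<in> Xs ! i} = {a..b}"
      using lXs by simp
  next
    fix e assume e: "e \<in> del_vertex_edges E y"
    then have eE: "e \<in> E" "y \<notin> e" by (auto simp: del_vertex_edges_def)
    then obtain a b where ab: "e = {a, b}" "a \<noteq> b" "a \<in> V" "b \<in> V"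
      using g eE(1) unfolding graph_def by blast
    obtain p where p: "p < n" "a = vs ! p" using idx ab eE by blast
    obtain q where q: "q < n" "b = vs ! q" using idx ab eE by blast
    have adjab: "adj E a b" using ab eE by (simp add: adj_def)
    have "p \<noteq> q" using p q ab by auto
    then show "\<exists>i<length Xs. e \<subseteq> Xs ! i"
    proof (cases "p < q")
      case True
      have "a \<in> X q" using memX[OF p(1) q(1)] True q adjab p by auto
      moreover have "b \<in> X q" using q by (simp add: X_def)
      ultimately show ?thesis using q nthXs lXs ab by auto
    next
      case False
      then have "q < p" using \<open>p \<noteq> q\<close> by simp
      have "b \<in> X p" using memX[OF q(1) p(1)] \<open>q < p\<close> q adj_sym[OF adjab] p by auto
      moreover have "a \<in> X p" using p by (simp add: X_def)
      ultimately show ?thesis using p nthXs lXs ab by auto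
    qed
  qed
  have hdX: "x \<in> hd Xs" using n1 vs0 by (auto simp: Xs_def X_def hd_map upt_rec)
  have finS: "finite (S i)" for i by (simp add: S_def)
  have cardX: "card (X i) \<le> 1 + (if i = 0 then 0 else c)" if "i < n" for i
  proof (cases "i = 0")
    case True
    then show ?thesis by (simp add: X_def S_def)
  next
    case False
    have "card (S i) \<le> card (cut V E (set (take i vs)))"
    proof (rule card_le_cut[OF finE])
      show "S i \<subseteq> set (take i vs)" using take_mem[OF dvs] that by (auto simp: S_def n_def)
    next
      fix u assume "u \<in> S i"
      then obtain j k where jk: "u = vs ! j" "j < i" "i \<le> k" "k < n" "adj E (vs ! j) (vs ! k)"
        by (auto simp: S_def)
      have "vs ! k \<in> V - set (take i vs)" using take_mem[OF dvs, of k i] jk inV[of k] by (auto simp: n_def)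
      then show "\<exists>w\<in>V - set (take i vs). adj E u w" using jk by blast
    qed
    also have "\<dots> \<le> c" using cmax[of i] False that unfolding cutk_def by simp
    finally show ?thesis using False card_insert_le[of "S i" "vs ! i"] finS[of i] unfolding X_def
      by (simp add: card_insert_if split: if_splits)
  qed
  have wbound: "pd_width Xs \<le> int c" and wbound1: "n = 1 \<Longrightarrow> pd_width Xs \<le> 0"
  proof -
    have cX: "card (X i) \<le> 1 + c" if "i < n" for i using cardX[OF that] by (simp split: if_splits)
    have "Max (card ` set Xs) \<le> 1 + c"
      using cX n1 by (auto simp: Xs_def intro!: Max.boundedI)
    then show "pd_width Xs \<le> int c" by (simp add: pd_width_def)
    assume "n = 1"
    then have "set Xs = {X 0}" by (simp add: Xs_def)
    then have "Max (card ` set Xs) \<le> 1" using cardX[of 0] \<open>n = 1\<close> by simp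
    then show "pd_width Xs \<le> 0" by (simp add: pd_width_def)
  qed
  have pw: "pw_at (V - {y}) (del_vertex_edges E y) x \<le> pd_width Xs"
    using pw_le[OF _ pd hdX] fin by simp
  have part1: "\<exists>F. xy_bond V E x y F \<and>
            pw_at (V - {y}) (del_vertex_edges E y) x \<le> 3 * int (card F) - 2"
    using bondF pw wbound cF c1' by (intro exI[of _ F]) auto
  have part2: "\<exists>F. xy_bond V E x y F \<and>
               pw_at (V - {y}) (del_vertex_edges E y) x \<le> 3 * int (card F) - 3"
    if nc: "\<not> has_cutvertex V E"
  proof (cases "n = 1")
    case True
    then show ?thesis using bondF pw wbound1 cF c1' by (intro exI[of _ F]) auto
  next
    case False
    then have n2: "n \<ge> 2" using n1 by simp
    have t1: "set (take 1 vs) = {x}" by (simp add: vs_def)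
    define z where "z = vs ! 1"
    have z: "z \<in> V" "z \<noteq> y" "z \<noteq> x" using inV[of 1] n2 dvs vs0 nth_eq_iff_index_eq n_def
      unfolding z_def by (metis One_nat_def Suc_1 Suc_le_lessD Suc_lessD zero_neq_one DiffE insertCI)+
    have "cutk 1 \<noteq> {}" using cutne[of 1] n1 fincut[of 1] by auto
    then obtain e where e: "e \<in> cutk 1" by blast
    then obtain w where w: "e = {x, w}" "w \<in> V" "w \<noteq> x" "e \<in> E"
      unfolding cutk_def cut_def using t1 by auto
    obtain t where t: "t \<in> V" "t \<noteq> x" "t \<noteq> w"
      using z yV xy by (cases "w = y") auto
    have "reach (V - {w}) E x t" using nocut_reach[OF fin cg nc] xV t w by auto
    then obtain u q where uq: "u \<in> V - {w}" "u \<in> {x}" "q \<in> V - {w}" "q \<notin> {x}" "adj E u q"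
      using reach_cross[of "V - {w}" E x t "{x}"] t by blast
    have e': "{x, q} \<in> cutk 1" using uq t1 by (auto simp: cutk_def cut_def adj_def)
    have "{x, q} \<noteq> e" using uq w by (auto simp: doubleton_eq_iff)
    then have "card {e, {x, q}} \<le> card (cutk 1)" using e e' fincut[of 1] by (intro card_mono) auto
    then have "card (cutk 1) \<ge> 2" using \<open>{x, q} \<noteq> e\<close> by simp
    then have "c \<ge> 2" using cmax[of 1] n2 by simp
    then show ?thesis using bondF pw wbound cF by (intro exI[of _ F]) auto
  qed
  show ?thesis using part1 part2 by blast
qed


end
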